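(* Let $\Gamma$ be a maximal consistent set of SBTrust, $\delta$ a propositional formula, and $(\Delta,\varphi,i)\in\mathit{max}([\delta]_\Gamma)$. Then (a) $\Delta$ is $\varphi$-likely for $\Gamma$; and (b) $\neg(\delta\to\varphi)\rightsquigarrow\bot\in\Gamma$.
   Context: $\mathcal{L}_T$: $\alpha::=\varphi\mid\varphi\rightsquigarrow\varphi\mid B(\alpha)\mid\alpha*\alpha\mid\neg\alpha$, with $\varphi$ ranging over classical propositional formulas (set $\mathcal{L}_{CL}$) and $*\in\{\land,\lor,\to,\leftrightarrow\}$. SBTrust is the Hilbert system ($\varphi,\psi,\chi,\varphi_i,\psi_i$ propositional; $\alpha,\beta\in\mathcal{L}_T$; rule outputs in $\mathcal{L}_T$): classical tautologies and Modus Ponens; $\varphi\rightsquigarrow\varphi$; $(\varphi\rightsquigarrow\bot)\to\neg\varphi$; $((\psi\land\chi)\rightsquigarrow\varphi)\to(\psi\rightsquigarrow(\chi\to\varphi))$; $(\neg(\varphi\leftrightarrow\psi)\rightsquigarrow\bot)\to((\varphi\rightsquigarrow\chi)\leftrightarrow(\psi\rightsquigarrow\chi))$; rule RCK: from $(\varphi_1\land\dots\land\varphi_n)\to\varphi_{n+1}$ infer $\bigwedge_{j\le n}(\psi\rightsquigarrow\varphi_j)\to(\psi\rightsquigarrow\varphi_{n+1})$; rule $\mathbf{S5_F}$: from $(\ell_1\land\dots\land\ell_n)\to\chi$ infer $(\ell_1\land\dots\land\ell_n)\to(\neg\chi\rightsquigarrow\bot)$, each $\ell_j$ being $\varphi_j\rightsquigarrow\psi_j$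 or its negation, $\chi$ propositional; $B(\alpha\to\beta)\to(B\alpha\to B\beta)$; $B\alpha\to\neg B\neg\alpha$; $B\alpha\to BB\alpha$; necessitation for $B$. A maximal consistent set (MCS) is $\Gamma\subseteq\mathcal{L}_T$ with $\Gamma\nvdash\bot$ and, for each $\alpha$, $\alpha\in\Gamma$ or $\neg\alpha\in\Gamma$. For MCSs, $\Gamma\leftrightsquigarrow\Delta$ iff they contain the same formulas of the form $\chi\rightsquigarrow\psi$; $[\Gamma]_\leftrightsquigarrow$ is the equivalence class. $\rightsquigarrow_\varphi(\Gamma)=\{\psi:\varphi\rightsquigarrow\psi\in\Gamma\}$, and $\Delta$ is $\varphi$-likely for $\Gamma$ if $\rightsquigarrow_\varphi(\Gamma)\subseteq\Delta$. Let $S_\Gamma=[\Gamma]_\leftrightsquigarrow\times\mathcal{L}_{CL}\times\{0,1,2\}$ and $[\delta]_\Gamma=\{(\Delta,\varphi,i)\in S_\Gamma:\delta\in\Delta\}$. Define $\succeq_\Gamma\subseteq S_\Gamma\times S_\Gamma$ by: $(\Delta,\varphi,i)\succeq_\Gamma(\Omega,\psi,j)$ iff ($\Delta$ is $\varphi$-likely for $\Gamma$ and $\varphi\in\Omega$) or ($i=1,j=0$) or ($i=2,j=1$) or ($i=0,j=2$). For $X\subseteq S_\Gamma$, $\mathit{max}(X)=\{x\in X:\forall y\in X\,(y\succeq_\Gamma x\Rightarrow x\succeq_\Gamma y)\}$. *)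

theory Defs
  imports Main
begin

datatype pform = PVar nat | PBot | PNot pform | PAnd pform pform | POr pform pform
  | PImp pform pform | PIff pform pform

text \<open>The language L_T. Propositional formulas are embedded via emb below,
  so that L_CL is literally a subset of L_T.\<close>
datatype tform = TVar nat | TBot | TCond pform pform | TB tform | TNot tform
  | TAnd tform tform | TOr tform tform | TImp tform tform | TIff tform tform

fun emb :: "pform \<Rightarrow> tform" where
  "emb (PVar n) = TVar n"
| "emb PBot = TBot"
| "emb (PNot a) = TNot (emb a)"
| "emb (PAnd a b) = TAnd (emb a) (emb b)"
| "emb (POr a b) = TOr (emb a) (emb b)"
| "emb (PImp a b) = TImp (emb a) (emb b)"
| "emb (PIff a b) = TIff (emb a) (emb b)"

fun teval :: "(nat \<Rightarrow> bool) \<Rightarrow> (tform \<Rightarrow> bool) \<Rightarrow> tform \<Rightarrow> bool" where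
  "teval V M (TVar n) = V n"
| "teval V M TBot = False"
| "teval V M (TCond a b) = M (TCond a b)"
| "teval V M (TB a) = M (TB a)"
| "teval V M (TNot a) = (\<not> teval V M a)"
| "teval V M (TAnd a b) = (teval V M a \<and> teval V M b)"
| "teval V M (TOr a b) = (teval V M a \<or> teval V M b)"
| "teval V M (TImp a b) = (teval V M a \<longrightarrow> teval V M b)"
| "teval V M (TIff a b) = (teval V M a \<longleftrightarrow> teval V M b)"

definition tautology :: "tform \<Rightarrow> bool" where
  "tautology a \<longleftrightarrow> (\<forall>V M. teval V M a)"

text \<open>Conjunctions of nonempty lists (only used on nonempty lists).\<close>
fun pconj :: "pform list \<Rightarrow> pform" where
  "pconj [] = PImp PBot PBot"
| "pconj [x] = x"
| "pconj (x # y # ys) = PAnd x (pconj (y # ys))"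

fun tconj :: "tform list \<Rightarrow> tform" where
  "tconj [] = TImp TBot TBot"
| "tconj [x] = x"
| "tconj (x # y # ys) = TAnd x (tconj (y # ys))"

definition cond_literal :: "tform \<Rightarrow> bool" where
  "cond_literal l \<longleftrightarrow> (\<exists>a b. l = TCond a b \<or> l = TNot (TCond a b))"

inductive sbt_thm :: "tform \<Rightarrow> bool" where
  taut: "tautology a \<Longrightarrow> sbt_thm a"
| mp: "sbt_thm (TImp a b) \<Longrightarrow> sbt_thm a \<Longrightarrow> sbt_thm b"
| refl: "sbt_thm (TCond p p)"
| botneg: "sbt_thm (TImp (TCond p PBot) (TNot (emb p)))"
| exp: "sbt_thm (TImp (TCond (PAnd q r) p) (TCond q (PImp r p)))"
| lleq: "sbt_thm (TImp (TCond (PNot (PIff p q)) PBot) (TIff (TCond p r) (TCond q r)))"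
| RCK: "ps \<noteq> [] \<Longrightarrow> sbt_thm (emb (PImp (pconj ps) p)) \<Longrightarrow>
        sbt_thm (TImp (tconj (map (\<lambda>pj. TCond q pj) ps)) (TCond q p))"
| S5F: "ls \<noteq> [] \<Longrightarrow> (\<forall>l\<in>set ls. cond_literal l) \<Longrightarrow> sbt_thm (TImp (tconj ls) (emb c)) \<Longrightarrow>
        sbt_thm (TImp (tconj ls) (TCond (PNot c) PBot))"
| K: "sbt_thm (TImp (TB (TImp a b)) (TImp (TB a) (TB b)))"
| D: "sbt_thm (TImp (TB a) (TNot (TB (TNot a))))"
| four: "sbt_thm (TImp (TB a) (TB (TB a)))"
| nec: "sbt_thm a \<Longrightarrow> sbt_thm (TB a)"

definition derives :: "tform set \<Rightarrow> tform \<Rightarrow> bool" where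
  "derives G a \<longleftrightarrow> (\<exists>L. set L \<subseteq> G \<and> sbt_thm (foldr TImp L a))"

definition mcs :: "tform set \<Rightarrow> bool" where
  "mcs G \<longleftrightarrow> \<not> derives G TBot \<and> (\<forall>a. a \<in> G \<or> TNot a \<in> G)"

definition cond_equiv :: "tform set \<Rightarrow> tform set \<Rightarrow> bool" where
  "cond_equiv G D \<longleftrightarrow> (\<forall>p q. TCond p q \<in> G \<longleftrightarrow> TCond p q \<in> D)"

definition cond_class :: "tform set \<Rightarrow> tform set set" where
  "cond_class G = {D. mcs D \<and> cond_equiv G D}"

definition cond_of :: "pform \<Rightarrow> tform set \<Rightarrow> pform set" where
  "cond_of p G = {q. TCond p q \<in> G}"

definition likely :: "tform set \<Rightarrow> pform \<Rightarrow> tform set \<Rightarrow> bool" where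
  "likely G p D \<longleftrightarrow> emb ` cond_of p G \<subseteq> D"

definition Sset :: "tform set \<Rightarrow> (tform set \<times> pform \<times> nat) set" where
  "Sset G = cond_class G \<times> UNIV \<times> {0, 1, 2}"

definition ext_set :: "tform set \<Rightarrow> pform \<Rightarrow> (tform set \<times> pform \<times> nat) set" where
  "ext_set G d = {x \<in> Sset G. emb d \<in> fst x}"

fun pref :: "tform set \<Rightarrow> (tform set \<times> pform \<times> nat) \<Rightarrow> (tform set \<times> pform \<times> nat) \<Rightarrow> bool" where
  "pref G (D, p, i) (Om, q, j) \<longleftrightarrow>
     (likely G p D \<and> emb p \<in> Om) \<or> (i = 1 \<and> j = 0) \<or> (i = 2 \<and> j = 1) \<or> (i = 0 \<and> j = 2)"

definition maxel :: "tform set \<Rightarrow> (tform set \<times> pform \<times> nat) set \<Rightarrow> (tform set \<times> pform \<times> nat) set" where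
  "maxel G X = {x \<in> X. \<forall>y\<in>X. pref G y x \<longrightarrow> pref G x y}"

end

theory Submission
  imports Defs
begin

lemma teval_foldr: "teval V M (foldr TImp L a) = ((\<forall>x\<in>set L. teval V M x) \<longrightarrow> teval V M a)"
  by (induction L) auto

lemma teval_tconj: "teval V M (tconj L) = (\<forall>x\<in>set L. teval V M x)"
  by (induction L rule: tconj.induct) auto

lemma thm_taut1: "sbt_thm a \<Longrightarrow> (\<And>V M. teval V M a \<Longrightarrow> teval V M b) \<Longrightarrow> sbt_thm b"
proof -
  assume a: "sbt_thm a" and h: "\<And>V M. teval V M a \<Longrightarrow> teval V M b"
  have "sbt_thm (TImp a b)" by (rule sbt_thm.taut) (auto simp: tautology_def h)
  then show ?thesis using a by (rule sbt_thm.mp)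
qed

lemma thm_taut2: "sbt_thm a \<Longrightarrow> sbt_thm b \<Longrightarrow> (\<And>V M. teval V M a \<Longrightarrow> teval V M b \<Longrightarrow> teval V M c) \<Longrightarrow> sbt_thm c"
proof -
  assume a: "sbt_thm a" and b: "sbt_thm b" and h: "\<And>V M. teval V M a \<Longrightarrow> teval V M b \<Longrightarrow> teval V M c"
  have "sbt_thm (TImp a (TImp b c))" by (rule sbt_thm.taut) (auto simp: tautology_def h)
  then have "sbt_thm (TImp b c)" using a by (rule sbt_thm.mp)
  then show ?thesis using b by (rule sbt_thm.mp)
qed

lemma mcs_closed:
  assumes "mcs G" "set L \<subseteq> G" "sbt_thm (foldr TImp L b)"
  shows "b \<in> G"
proof (rule ccontr)
  assume "b \<notin> G"
  then have nb: "TNot b \<in> G" using assms(1) by (auto simp: mcs_def)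
  have "sbt_thm (foldr TImp (L @ [TNot b]) TBot)"
    using assms(3) by (rule thm_taut1) (auto simp: teval_foldr)
  moreover have "set (L @ [TNot b]) \<subseteq> G" using assms(2) nb by auto
  ultimately have "derives G TBot" unfolding derives_def by blast
  then show False using assms(1) by (auto simp: mcs_def)
qed

lemma mcs_thm: "mcs G \<Longrightarrow> sbt_thm a \<Longrightarrow> a \<in> G"
  using mcs_closed[of G "[]" a] by auto

lemma mcs_not: "mcs G \<Longrightarrow> a \<in> G \<Longrightarrow> TNot a \<in> G \<Longrightarrow> False"
proof -
  assume g: "mcs G" "a \<in> G" "TNot a \<in> G"
  have "sbt_thm (foldr TImp [a, TNot a] TBot)"
    by (rule sbt_thm.taut) (auto simp: tautology_def)
  then have "derives G TBot" unfolding derives_def using g by (intro exI[of _ "[a, TNot a]"]) auto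
  then show False using g by (auto simp: mcs_def)
qed

lemma chain_list:
  assumes "chain\<^sub>\<subseteq> C" "C \<noteq> {}" "set L \<subseteq> \<Union>C"
  shows "\<exists>X\<in>C. set L \<subseteq> X"
  using assms(3)
proof (induction L)
  case Nil then show ?case using assms(2) by auto
next
  case (Cons x L)
  then obtain X where X: "X \<in> C" "set L \<subseteq> X" by auto
  obtain Y where Y: "Y \<in> C" "x \<in> Y" using Cons.prems by auto
  have "X \<subseteq> Y \<or> Y \<subseteq> X" using assms(1) X Y unfolding chain_subset_def by blast
  then show ?case using X Y by auto
qed

lemma lindenbaum:
  assumes "\<not> derives S TBot"
  shows "\<exists>G. S \<subseteq> G \<and> mcs G"
proof -
  let ?A = "{T. S \<subseteq> T \<and> \<not> derives T TBot}"
  have "\<forall>C\<in>chains ?A. \<exists>U\<in>?A. \<forall>X\<in>C. X \<subseteq> U"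
  proof
    fix C assume C: "C \<in> chains ?A"
    show "\<exists>U\<in>?A. \<forall>X\<in>C. X \<subseteq> U"
    proof (cases "C = {}")
      case True then show ?thesis using assms by auto
    next
      case False
      have ch: "chain\<^sub>\<subseteq> C" "C \<subseteq> ?A" using C by (auto simp: chains_def)
      have "\<not> derives (\<Union>C) TBot"
      proof
        assume "derives (\<Union>C) TBot"
        then obtain L where L: "set L \<subseteq> \<Union>C" "sbt_thm (foldr TImp L TBot)" by (auto simp: derives_def)
        then obtain X where "X \<in> C" "set L \<subseteq> X" using chain_list[OF ch(1) False] by blast
        then have "derives X TBot" using L by (auto simp: derives_def)
        then show False using ch(2) \<open>X \<in> C\<close> by auto
      qed
      moreover have "S \<subseteq> \<Union>C" using False ch(2) by auto
      ultimately show ?thesis by auto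
    qed
  qed
  then obtain M where M: "M \<in> ?A" and mx: "\<forall>X\<in>?A. M \<subseteq> X \<longrightarrow> X = M"
    by (rule Zorn_Lemma2[THEN bexE]) blast
  have "\<forall>a. a \<in> M \<or> TNot a \<in> M"
  proof (rule ccontr)
    assume "\<not> (\<forall>a. a \<in> M \<or> TNot a \<in> M)"
    then obtain a where a: "a \<notin> M" "TNot a \<notin> M" by auto
    have "derives (insert a M) TBot"
    proof (rule ccontr)
      assume "\<not> derives (insert a M) TBot"
      then have "insert a M \<in> ?A" using M by auto
      then have "insert a M = M" using mx by blast
      then show False using a by auto
    qed
    then obtain L1 where L1: "set L1 \<subseteq> insert a M" "sbt_thm (foldr TImp L1 TBot)" by (auto simp: derives_def)
    have "derives (insert (TNot a) M) TBot"
    proof (rule ccontr)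
      assume "\<not> derives (insert (TNot a) M) TBot"
      then have "insert (TNot a) M \<in> ?A" using M by auto
      then have "insert (TNot a) M = M" using mx by blast
      then show False using a by auto
    qed
    then obtain L2 where L2: "set L2 \<subseteq> insert (TNot a) M" "sbt_thm (foldr TImp L2 TBot)" by (auto simp: derives_def)
    let ?L = "filter (\<lambda>x. x \<noteq> a) L1 @ filter (\<lambda>x. x \<noteq> TNot a) L2"
    have "sbt_thm (foldr TImp ?L TBot)"
      using L1(2) L2(2)
    proof (rule thm_taut2)
      fix V M'
      assume h1: "teval V M' (foldr TImp L1 TBot)" and h2: "teval V M' (foldr TImp L2 TBot)"
      show "teval V M' (foldr TImp ?L TBot)"
      proof (cases "teval V M' a")
        case True then show ?thesis using h1 by (auto simp: teval_foldr)
      next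
        case False then show ?thesis using h2 by (auto simp: teval_foldr)
      qed
    qed
    moreover have "set ?L \<subseteq> M" using L1(1) L2(1) by auto
    ultimately have "derives M TBot" unfolding derives_def by blast
    then show False using M by auto
  qed
  then show ?thesis using M unfolding mcs_def by auto
qed

lemma emb_not_cond: "emb x \<noteq> TCond a b"
  by (cases x) auto

lemma emb_not_lit: "\<not> cond_literal (emb x)"
  unfolding cond_literal_def
  by (cases x) (auto simp: emb_not_cond)

lemma neg_emb_not_lit: "\<not> cond_literal (TNot (emb x))"
  unfolding cond_literal_def by (auto simp: emb_not_cond)

theorem lemma2:
  fixes G D :: "tform set" and d p :: pform and i :: nat
  assumes "mcs G"
    and "(D, p, i) \<in> maxel G (ext_set G d)"
  shows "likely G p D \<and> TCond (PNot (PImp d p)) PBot \<in> G"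
proof -
  have xin: "(D, p, i) \<in> ext_set G d" and
    mx: "\<forall>y\<in>ext_set G d. pref G y (D, p, i) \<longrightarrow> pref G (D, p, i) y"
    using assms(2) unfolding maxel_def by auto
  have i3: "i \<in> {0,1,2}" and Dc: "D \<in> cond_class G" and dD: "emb d \<in> D"
    using xin by (auto simp: ext_set_def Sset_def)
  define j where "j = (if i = 0 then 1 else if i = 1 then (2::nat) else 0)"
  have j3: "j \<in> {0,1,2}" unfolding j_def by auto
  have cyc1: "(j = 1 \<and> i = 0) \<or> (j = 2 \<and> i = 1) \<or> (j = 0 \<and> i = 2)" using i3 unfolding j_def by auto
  have cyc2: "\<not> ((i = 1 \<and> j = 0) \<or> (i = 2 \<and> j = 1) \<or> (i = 0 \<and> j = 2))" using i3 unfolding j_def by auto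
  have lk: "likely G p D"
  proof (rule ccontr)
    assume nl: "\<not> likely G p D"
    have "(D, p, j) \<in> ext_set G d" using Dc dD j3 by (auto simp: ext_set_def Sset_def)
    moreover have "pref G (D, p, j) (D, p, i)" using cyc1 by auto
    ultimately have "pref G (D, p, i) (D, p, j)" using mx by blast
    then show False using nl cyc2 by auto
  qed
  have "TCond (PNot (PImp d p)) PBot \<in> G"
  proof (rule ccontr)
    assume nc: "TCond (PNot (PImp d p)) PBot \<notin> G"
    define S where "S = {emb d, TNot (emb p)} \<union> {TCond a b | a b. TCond a b \<in> G}
       \<union> {TNot (TCond a b) | a b. TCond a b \<notin> G}"
    have "\<not> derives S TBot"
    proof
      assume "derives S TBot"
      then obtain L where L: "set L \<subseteq> S" "sbt_thm (foldr TImp L TBot)" by (auto simp: derives_def)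
      define ls where "ls = TCond PBot PBot # filter cond_literal L"
      have lsG: "set ls \<subseteq> G"
      proof
        fix x assume "x \<in> set ls"
        then consider "x = TCond PBot PBot" | "x \<in> set L" "cond_literal x" unfolding ls_def by auto
        then show "x \<in> G"
        proof cases
          case 1 then show ?thesis using mcs_thm[OF assms(1) sbt_thm.refl] by simp
        next
          case 2
          then have "x \<in> S" using L(1) by auto
          then consider "x = emb d" | "x = TNot (emb p)" | a b where "x = TCond a b" "TCond a b \<in> G"
            | a b where "x = TNot (TCond a b)" "TCond a b \<notin> G" unfolding S_def by auto
          then show ?thesis
          proof cases
            case 1 then show ?thesis using 2 emb_not_lit by auto
          next
            case 2 then show ?thesis using \<open>cond_literal x\<close> neg_emb_not_lit by auto
          next
            case 3 then show ?thesis by simp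
          next
            case 4 then show ?thesis using assms(1) by (auto simp: mcs_def)
          qed
        qed
      qed
      have lsne: "ls \<noteq> []" unfolding ls_def by simp
      have litall: "\<forall>l\<in>set ls. cond_literal l" unfolding ls_def by (auto simp: cond_literal_def)
      have Lcases: "\<And>x. x \<in> set L \<Longrightarrow> x \<in> set ls \<or> x = emb d \<or> x = TNot (emb p)"
      proof -
        fix x assume "x \<in> set L"
        then have "x \<in> S" using L(1) by auto
        then show "x \<in> set ls \<or> x = emb d \<or> x = TNot (emb p)"
          unfolding S_def ls_def using \<open>x \<in> set L\<close> by (auto simp: cond_literal_def)
      qed
      have "sbt_thm (TImp (tconj ls) (emb (PImp d p)))"
        using L(2)
      proof (rule thm_taut1)
        fix V M
        assume h: "teval V M (foldr TImp L TBot)"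
        show "teval V M (TImp (tconj ls) (emb (PImp d p)))"
        proof (rule ccontr)
          assume "\<not> teval V M (TImp (tconj ls) (emb (PImp d p)))"
          then have a1: "\<forall>x\<in>set ls. teval V M x" and a2: "teval V M (emb d)" "\<not> teval V M (emb p)"
            by (auto simp: teval_tconj)
          have "\<forall>x\<in>set L. teval V M x" using Lcases a1 a2 by fastforce
          then show False using h by (simp add: teval_foldr)
        qed
      qed
      then have "sbt_thm (TImp (tconj ls) (TCond (PNot (PImp d p)) PBot))"
        by (rule sbt_thm.S5F[OF lsne litall])
      then have i1: "TImp (tconj ls) (TCond (PNot (PImp d p)) PBot) \<in> G" by (rule mcs_thm[OF assms(1)])
      have t2: "sbt_thm (foldr TImp ls (tconj ls))"
        by (rule sbt_thm.taut) (simp add: tautology_def teval_foldr teval_tconj)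
      have i2: "tconj ls \<in> G" by (rule mcs_closed[OF assms(1) lsG t2])
      have t3: "sbt_thm (foldr TImp [TImp (tconj ls) (TCond (PNot (PImp d p)) PBot), tconj ls] (TCond (PNot (PImp d p)) PBot))"
        by (rule sbt_thm.taut) (simp add: tautology_def)
      have "TCond (PNot (PImp d p)) PBot \<in> G"
        by (rule mcs_closed[OF assms(1) _ t3]) (use i1 i2 in simp)
      then show False using nc by simp
    qed
    then obtain Om where Om: "S \<subseteq> Om" "mcs Om" using lindenbaum by blast
    have ce: "cond_equiv G Om"
      unfolding cond_equiv_def
    proof (intro allI iffI)
      fix a b assume "TCond a b \<in> G" then show "TCond a b \<in> Om" using Om(1) unfolding S_def by auto
    next
      fix a b assume h: "TCond a b \<in> Om"
      show "TCond a b \<in> G"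
      proof (rule ccontr)
        assume "TCond a b \<notin> G"
        then have "TNot (TCond a b) \<in> Om" using Om(1) unfolding S_def by auto
        then show False using mcs_not[OF Om(2) h] by simp
      qed
    qed
    have pO: "emb p \<notin> Om" using Om mcs_not[OF Om(2), of "emb p"] unfolding S_def by auto
    have "(Om, d, j) \<in> ext_set G d" using Om ce j3 unfolding S_def
      by (auto simp: ext_set_def Sset_def cond_class_def)
    moreover have "pref G (Om, d, j) (D, p, i)" using cyc1 by auto
    ultimately have "pref G (D, p, i) (Om, d, j)" using mx by blast
    then show False using pO cyc2 by auto
  qed
  then show ?thesis using lk by simp
qed

end
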